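(* Let $A$ be an AUF algebra and let $\psi\in\mathrm{SLF}(A)$ be non-degenerate. Let $M\in\mathrm{Coh}_{\mathrm L}(A)$ be projective as a left $A$-module, and let $B=\mathrm{End}_{A,-}(M)^{\mathrm{op}}$. Then the right pseudotrace ${}^\psi\mathrm{Tr}\in\mathrm{SLF}(B)$ associated to $\psi$ and the $A$-$B$ bimodule $M$ is non-degenerate.
   Context: All algebras are associative $\mathbb C$-algebras, not necessarily unital. An idempotent is $e$ with $e^2=e$. An algebra $A$ is AUF if there is a family $(e_i)_{i\in\mathfrak I}$ of mutually orthogonal idempotents with $\dim e_iAe_j<\infty$ and $A=\sum_{i,j}e_iAe_j$. A left $A$-module $M$ is quasicoherent if $\xi\in A\xi$ for all $\xi\in M$, coherent if moreover finitely generated; $\mathrm{Coh}_{\mathrm L}(A)$ is the category of coherent left $A$-modules. $B=\mathrm{End}_{A,-}(M)^{\mathrm{op}}$ acts on $M$ on the right by $\xi\cdot T=T(\xi)$. $\mathrm{SLF}(C)$ is the space of linear $\phi:C\to\mathbb C$ with $\phi(xy)=\phi(yx)$; $\phi$ is non-degenerate if $\{x\in C:\phi(xy)=0\ \forall y\in C\}=0$. Right pseudotrace: choose an idempotent $e\in A$ and finitely many left $A$-module maps $\beta_j:Ae\to M$, $\check\beta^j:M\to Ae$ with $\sum_j\beta_j\circ\check\beta^j=\mathrm{id}_M$ (these exist since $M$ is coherent and projective); then ${}^\psi\mathrm{Tr}(y)=\sum_j\psi(\check\beta^j(\beta_j(e)y))$ for $y\in B$, independent of choices. *)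

theory Defs
  imports Complex_Main
begin

definition c_algebra :: "(complex \<Rightarrow> 'a::ring \<Rightarrow> 'a) \<Rightarrow> bool" where
  "c_algebra sA \<longleftrightarrow> vector_space sA \<and>
     (\<forall>c x y. sA c (x * y) = sA c x * y \<and> sA c (x * y) = x * sA c y)"

definition idempotent :: "'a::ring \<Rightarrow> bool" where
  "idempotent e \<longleftrightarrow> e * e = e"

definition AUF :: "(complex \<Rightarrow> 'a::ring \<Rightarrow> 'a) \<Rightarrow> bool" where
  "AUF sA \<longleftrightarrow> c_algebra sA \<and>
    (\<exists>(I::'a set) (e::'a \<Rightarrow> 'a).
       (\<forall>i\<in>I. idempotent (e i)) \<and>
       (\<forall>i\<in>I. \<forall>j\<in>I. i \<noteq> j \<longrightarrow> e i * e j = 0) \<and>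
       (\<forall>i\<in>I. \<forall>j\<in>I. \<exists>F. finite F \<and> F \<subseteq> {e i * x * e j | x. True} \<and>
            module.span sA F = {e i * x * e j | x. True}) \<and>
       UNIV = module.span sA (\<Union>i\<in>I. \<Union>j\<in>I. {e i * x * e j | x. True}))"

definition SLF :: "(complex \<Rightarrow> 'a::ring \<Rightarrow> 'a) \<Rightarrow> ('a \<Rightarrow> complex) \<Rightarrow> bool" where
  "SLF sA \<phi> \<longleftrightarrow> Vector_Spaces.linear sA (*) \<phi> \<and> (\<forall>x y. \<phi> (x * y) = \<phi> (y * x))"

definition nondegenerate_on :: "'c set \<Rightarrow> ('c \<Rightarrow> 'c \<Rightarrow> 'c) \<Rightarrow> 'c \<Rightarrow> ('c \<Rightarrow> complex) \<Rightarrow> bool" where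
  "nondegenerate_on C mult z \<phi> \<longleftrightarrow> (\<forall>x\<in>C. (\<forall>y\<in>C. \<phi> (mult x y) = 0) \<longrightarrow> x = z)"

definition left_module ::
  "(complex \<Rightarrow> 'a::ring \<Rightarrow> 'a) \<Rightarrow> (complex \<Rightarrow> 'm::ab_group_add \<Rightarrow> 'm) \<Rightarrow> ('a \<Rightarrow> 'm \<Rightarrow> 'm) \<Rightarrow> bool" where
  "left_module sA sM act \<longleftrightarrow> c_algebra sA \<and> vector_space sM \<and>
     (\<forall>a b x. act (a * b) x = act a (act b x)) \<and>
     (\<forall>a b x. act (a + b) x = act a x + act b x) \<and>
     (\<forall>a x y. act a (x + y) = act a x + act a y) \<and>
     (\<forall>c a x. act (sA c a) x = sM c (act a x) \<and> act a (sM c x) = sM c (act a x))"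

definition quasicoherent :: "('a \<Rightarrow> 'm \<Rightarrow> 'm) \<Rightarrow> bool" where
  "quasicoherent act \<longleftrightarrow> (\<forall>\<xi>. \<exists>a. \<xi> = act a \<xi>)"

definition submodule ::
  "(complex \<Rightarrow> 'm::ab_group_add \<Rightarrow> 'm) \<Rightarrow> ('a \<Rightarrow> 'm \<Rightarrow> 'm) \<Rightarrow> 'm set \<Rightarrow> bool" where
  "submodule sM act N \<longleftrightarrow> 0 \<in> N \<and> (\<forall>x\<in>N. \<forall>y\<in>N. x + y \<in> N) \<and>
     (\<forall>c. \<forall>x\<in>N. sM c x \<in> N) \<and> (\<forall>a. \<forall>x\<in>N. act a x \<in> N)"

definition finitely_generated ::
  "(complex \<Rightarrow> 'm::ab_group_add \<Rightarrow> 'm) \<Rightarrow> ('a \<Rightarrow> 'm \<Rightarrow> 'm) \<Rightarrow> bool" where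
  "finitely_generated sM act \<longleftrightarrow>
     (\<exists>G. finite G \<and> (\<forall>N. submodule sM act N \<and> G \<subseteq> N \<longrightarrow> N = UNIV))"

definition coherent ::
  "(complex \<Rightarrow> 'm::ab_group_add \<Rightarrow> 'm) \<Rightarrow> ('a \<Rightarrow> 'm \<Rightarrow> 'm) \<Rightarrow> bool" where
  "coherent sM act \<longleftrightarrow> quasicoherent act \<and> finitely_generated sM act"

definition module_map ::
  "(complex \<Rightarrow> 'm::ab_group_add \<Rightarrow> 'm) \<Rightarrow> ('a \<Rightarrow> 'm \<Rightarrow> 'm) \<Rightarrow>
   (complex \<Rightarrow> 'n::ab_group_add \<Rightarrow> 'n) \<Rightarrow> ('a \<Rightarrow> 'n \<Rightarrow> 'n) \<Rightarrow> ('m \<Rightarrow> 'n) \<Rightarrow> bool" where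
  "module_map sM actM sN actN T \<longleftrightarrow>
     (\<forall>x y. T (x + y) = T x + T y) \<and> (\<forall>c x. T (sM c x) = sN c (T x)) \<and>
     (\<forall>a x. T (actM a x) = actN a (T x))"

text \<open>End_{A,-}(M): the A-module endomorphisms of M.  In B = End(M)^op the product
is S \<cdot> T = T \<circ> S (so that the right action \<xi> \<cdot> T = T \<xi> is a right action).\<close>

definition End_A :: "(complex \<Rightarrow> 'm::ab_group_add \<Rightarrow> 'm) \<Rightarrow> ('a \<Rightarrow> 'm \<Rightarrow> 'm) \<Rightarrow> ('m \<Rightarrow> 'm) set" where
  "End_A sM act = {T. module_map sM act sM act T}"

definition op_mult :: "('m \<Rightarrow> 'm) \<Rightarrow> ('m \<Rightarrow> 'm) \<Rightarrow> ('m \<Rightarrow> 'm)" where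
  "op_mult S T = T \<circ> S"

record ('a, 'n) amodule =
  mcarrier :: "'n set"
  madd :: "'n \<Rightarrow> 'n \<Rightarrow> 'n"
  mzero :: 'n
  mscale :: "complex \<Rightarrow> 'n \<Rightarrow> 'n"
  mact :: "'a \<Rightarrow> 'n \<Rightarrow> 'n"

definition is_amodule :: "(complex \<Rightarrow> 'a::ring \<Rightarrow> 'a) \<Rightarrow> ('a, 'n) amodule \<Rightarrow> bool" where
  "is_amodule sA N \<longleftrightarrow>
    (let S = mcarrier N; ad = madd N; z = mzero N; sc = mscale N; ac = mact N in
      z \<in> S \<and> (\<forall>x\<in>S. \<forall>y\<in>S. ad x y \<in> S) \<and> (\<forall>c. \<forall>x\<in>S. sc c x \<in> S) \<and>
      (\<forall>a. \<forall>x\<in>S. ac a x \<in> S) \<and>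
      (\<forall>x\<in>S. \<forall>y\<in>S. \<forall>w\<in>S. ad (ad x y) w = ad x (ad y w)) \<and>
      (\<forall>x\<in>S. \<forall>y\<in>S. ad x y = ad y x) \<and>
      (\<forall>x\<in>S. ad z x = x) \<and> (\<forall>x\<in>S. \<exists>y\<in>S. ad x y = z) \<and>
      (\<forall>c. \<forall>x\<in>S. \<forall>y\<in>S. sc c (ad x y) = ad (sc c x) (sc c y)) \<and>
      (\<forall>c d. \<forall>x\<in>S. sc (c + d) x = ad (sc c x) (sc d x)) \<and>
      (\<forall>c d. \<forall>x\<in>S. sc (c * d) x = sc c (sc d x)) \<and>
      (\<forall>x\<in>S. sc 1 x = x) \<and>
      (\<forall>a. \<forall>x\<in>S. \<forall>y\<in>S. ac a (ad x y) = ad (ac a x) (ac a y)) \<and>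
      (\<forall>a b. \<forall>x\<in>S. ac (a + b) x = ad (ac a x) (ac b x)) \<and>
      (\<forall>a b. \<forall>x\<in>S. ac (a * b) x = ac a (ac b x)) \<and>
      (\<forall>c a. \<forall>x\<in>S. ac (sA c a) x = sc c (ac a x) \<and> ac a (sc c x) = sc c (ac a x)))"

definition amodule_hom :: "('a, 'n) amodule \<Rightarrow> ('a, 'k) amodule \<Rightarrow> ('n \<Rightarrow> 'k) \<Rightarrow> bool" where
  "amodule_hom N K f \<longleftrightarrow>
     (\<forall>x\<in>mcarrier N. f x \<in> mcarrier K) \<and>
     (\<forall>x\<in>mcarrier N. \<forall>y\<in>mcarrier N. f (madd N x y) = madd K (f x) (f y)) \<and>
     (\<forall>c. \<forall>x\<in>mcarrier N. f (mscale N c x) = mscale K c (f x)) \<and>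
     (\<forall>a. \<forall>x\<in>mcarrier N. f (mact N a x) = mact K a (f x))"

definition type_module :: "(complex \<Rightarrow> 'm::ab_group_add \<Rightarrow> 'm) \<Rightarrow> ('a \<Rightarrow> 'm \<Rightarrow> 'm) \<Rightarrow> ('a, 'm) amodule" where
  "type_module sM act = \<lparr>mcarrier = UNIV, madd = (+), mzero = 0, mscale = sM, mact = act\<rparr>"

text \<open>HOL cannot quantify over all types inside a formula, so the test modules range over all
A-modules whose carrier is a subset of the type 'm => 'a * complex; this type is large
enough to contain (a copy of) M and the free unitization-module on the set M, so the
property is equivalent to projectivity in the category of all left A-modules.\<close>

definition projective_module ::
  "(complex \<Rightarrow> 'a::ring \<Rightarrow> 'a) \<Rightarrow> (complex \<Rightarrow> 'm::ab_group_add \<Rightarrow> 'm) \<Rightarrow> ('a \<Rightarrow> 'm \<Rightarrow> 'm) \<Rightarrow> bool" where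
  "projective_module sA sM act \<longleftrightarrow>
     (\<forall>(N :: ('a, 'm \<Rightarrow> 'a \<times> complex) amodule) (N' :: ('a, 'm \<Rightarrow> 'a \<times> complex) amodule) p f.
        is_amodule sA N \<and> is_amodule sA N' \<and> amodule_hom N N' p \<and>
        p ` mcarrier N = mcarrier N' \<and> amodule_hom (type_module sM act) N' f \<longrightarrow>
        (\<exists>g. amodule_hom (type_module sM act) N g \<and> (\<forall>\<xi>. p (g \<xi>) = f \<xi>)))"

definition pseudotrace_data ::
  "(complex \<Rightarrow> 'a::ring \<Rightarrow> 'a) \<Rightarrow> (complex \<Rightarrow> 'm::ab_group_add \<Rightarrow> 'm) \<Rightarrow> ('a \<Rightarrow> 'm \<Rightarrow> 'm) \<Rightarrow>
   'a \<Rightarrow> nat \<Rightarrow> (nat \<Rightarrow> 'a \<Rightarrow> 'm) \<Rightarrow> (nat \<Rightarrow> 'm \<Rightarrow> 'a) \<Rightarrow> bool" where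
  "pseudotrace_data sA sM act e n beta betac \<longleftrightarrow>
     idempotent e \<and>
     (\<forall>j<n.
        (\<forall>x\<in>{a * e | a. True}. \<forall>y\<in>{a * e | a. True}. beta j (x + y) = beta j x + beta j y) \<and>
        (\<forall>c. \<forall>x\<in>{a * e | a. True}. beta j (sA c x) = sM c (beta j x)) \<and>
        (\<forall>a. \<forall>x\<in>{a * e | a. True}. beta j (a * x) = act a (beta j x))) \<and>
     (\<forall>j<n.
        (\<forall>\<xi>. betac j \<xi> \<in> {a * e | a. True}) \<and>
        module_map sM act sA (*) (betac j)) \<and>
     (\<forall>\<xi>. (\<Sum>j<n. beta j (betac j \<xi>)) = \<xi>)"

definition right_pseudotrace ::
  "('a \<Rightarrow> complex) \<Rightarrow> 'a \<Rightarrow> nat \<Rightarrow> (nat \<Rightarrow> 'a \<Rightarrow> 'm) \<Rightarrow> (nat \<Rightarrow> 'm \<Rightarrow> 'a) \<Rightarrow> ('m \<Rightarrow> 'm) \<Rightarrow> complex" where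
  "right_pseudotrace \<psi> e n beta betac y = (\<Sum>j<n. \<psi> (betac j (y (beta j e))))"

end

theory Submission
  imports Defs
begin

lemma add_sum_comm:
  fixes f :: "'b::ab_group_add \<Rightarrow> 'c::ab_group_add"
  assumes "\<And>u v. f (u + v) = f u + f v"
  shows "f (sum g S) = (\<Sum>s\<in>S. f (g s))"
proof -
  have z: "f 0 = 0" using assms[of 0 0] by simp
  show ?thesis
  proof (cases "finite S")
    case True
    then show ?thesis by (induction S rule: finite_induct) (simp_all add: z assms)
  next
    case False
    then show ?thesis by (simp add: z)
  qed
qed

theorem proposition10p3:
  fixes sA :: "complex \<Rightarrow> 'a::ring \<Rightarrow> 'a"
    and sM :: "complex \<Rightarrow> 'm::ab_group_add \<Rightarrow> 'm"
    and act :: "'a \<Rightarrow> 'm \<Rightarrow> 'm"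
    and \<psi> :: "'a \<Rightarrow> complex"
    and e :: 'a and n :: nat
    and beta :: "nat \<Rightarrow> 'a \<Rightarrow> 'm" and betac :: "nat \<Rightarrow> 'm \<Rightarrow> 'a"
  assumes "AUF sA"
    and "SLF sA \<psi>"
    and "nondegenerate_on UNIV (*) 0 \<psi>"
    and "left_module sA sM act"
    and "coherent sM act"
    and "projective_module sA sM act"
    and "pseudotrace_data sA sM act e n beta betac"
  shows "nondegenerate_on (End_A sM act) op_mult (\<lambda>_. 0)
           (right_pseudotrace \<psi> e n beta betac)"
proof -
  have psiadd: "\<And>u v. \<psi> (u + v) = \<psi> u + \<psi> v"
    using assms(2) unfolding SLF_def Vector_Spaces.linear_iff by blast
  have psisym: "\<And>u v. \<psi> (u * v) = \<psi> (v * u)"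
    using assms(2) unfolding SLF_def by blast
  have nd: "\<And>u. (\<And>v. \<psi> (u * v) = 0) \<Longrightarrow> u = 0"
    using assms(3) unfolding nondegenerate_on_def by blast
  have actmul: "\<And>a b m. act (a * b) m = act a (act b m)"
   and actaddl: "\<And>a b m. act (a + b) m = act a m + act b m"
   and actaddr: "\<And>a m1 m2. act a (m1 + m2) = act a m1 + act a m2"
   and actsc: "\<And>c a m. act (sA c a) m = sM c (act a m)"
    using assms(4) unfolding left_module_def by blast+
  have cmul: "\<And>c u v. sA c (u * v) = sA c u * v"
    using assms(4) unfolding left_module_def c_algebra_def by blast
  have act0: "\<And>m. act 0 m = 0"
    using actaddl[of 0 0] by simp
  have acta0: "\<And>a. act a 0 = 0"
    using actaddr[of _ 0 0] by simp
  have idem: "e * e = e"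
    using assms(7) unfolding pseudotrace_data_def idempotent_def by blast
  have b1: "\<And>j a. j < n \<Longrightarrow> beta j (a * e) = act a (beta j e)"
  proof -
    fix j a assume "j < n"
    then have "\<forall>b. \<forall>x\<in>{a * e | a. True}. beta j (b * x) = act b (beta j x)"
      using assms(7) unfolding pseudotrace_data_def by blast
    moreover have "e \<in> {a * e | a. True}" using idem[symmetric] by blast
    ultimately show "beta j (a * e) = act a (beta j e)" by blast
  qed
  have b2: "\<And>j \<xi>. j < n \<Longrightarrow> betac j \<xi> * e = betac j \<xi>"
  proof -
    fix j \<xi> assume "j < n"
    then have "betac j \<xi> \<in> {a * e | a. True}"
      using assms(7) unfolding pseudotrace_data_def by blast
    then obtain a where "betac j \<xi> = a * e" by blast
    then show "betac j \<xi> * e = betac j \<xi>" by (simp add: mult.assoc idem)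
  qed
  have bcadd: "\<And>j u v. j < n \<Longrightarrow> betac j (u + v) = betac j u + betac j v"
   and bcact: "\<And>j a u. j < n \<Longrightarrow> betac j (act a u) = a * betac j u"
    using assms(7) unfolding pseudotrace_data_def module_map_def by blast+
  have dec: "\<And>\<xi>. (\<Sum>j<n. beta j (betac j \<xi>)) = \<xi>"
    using assms(7) unfolding pseudotrace_data_def by blast
  have b3: "\<And>j \<xi>. j < n \<Longrightarrow> beta j (betac j \<xi>) = act (betac j \<xi>) (beta j e)"
    by (metis b1 b2)
  show ?thesis
    unfolding nondegenerate_on_def
  proof (intro ballI impI)
    fix x assume xE: "x \<in> End_A sM act"
    assume H: "\<forall>y\<in>End_A sM act. right_pseudotrace \<psi> e n beta betac (op_mult x y) = 0"
    have xadd: "\<And>u v. x (u + v) = x u + x v"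
     and xact: "\<And>a u. x (act a u) = act a (x u)"
      using xE unfolding End_A_def module_map_def by blast+
    define F where "F i k = betac i (x (beta k e))" for i k
    have F0: "F i k = 0" if ik: "i < n" "k < n" for i k
    proof (rule nd)
      fix c
      define T where "T \<xi> = act (betac i \<xi> * c) (beta k e)" for \<xi>
      have TE: "T \<in> End_A sM act"
        unfolding End_A_def module_map_def T_def
      proof (intro CollectI conjI allI)
        fix u v show "act (betac i (u + v) * c) (beta k e) =
            act (betac i u * c) (beta k e) + act (betac i v * c) (beta k e)"
          by (simp add: bcadd ik distrib_right actaddl)
      next
        fix s u show "act (betac i (sM s u) * c) (beta k e) = sM s (act (betac i u * c) (beta k e))"
        proof -
          have "betac i (sM s u) = sA s (betac i u)"
            using assms(7) ik unfolding pseudotrace_data_def module_map_def by blast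
          then show ?thesis by (simp add: cmul[symmetric] actsc)
        qed
      next
        fix a u show "act (betac i (act a u) * c) (beta k e) = act a (act (betac i u * c) (beta k e))"
          by (simp add: bcact ik mult.assoc actmul)
      qed
      have "right_pseudotrace \<psi> e n beta betac (op_mult x T) = 0"
        using H TE by blast
      then have "(\<Sum>j<n. \<psi> (betac j (T (x (beta j e))))) = 0"
        unfolding right_pseudotrace_def op_mult_def by simp
      moreover have "\<psi> (betac j (T (x (beta j e)))) =
          \<psi> (betac i (x (beta j (betac j (act c (beta k e))))))" if j: "j < n" for j
      proof -
        let ?h = "betac j (act c (beta k e))"
        have "betac j (T (x (beta j e))) = F i j * ?h"
          unfolding T_def F_def by (simp add: actmul bcact j)
        then have "\<psi> (betac j (T (x (beta j e)))) = \<psi> (?h * F i j)"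
          using psisym by simp
        also have "?h * F i j = betac i (x (act ?h (beta j e)))"
          unfolding F_def by (simp add: xact bcact ik)
        also have "act ?h (beta j e) = beta j (betac j (act c (beta k e)))"
          using b3 j by simp
        finally show ?thesis .
      qed
      ultimately have S0: "(\<Sum>j<n. \<psi> (betac i (x (beta j (betac j (act c (beta k e))))))) = 0"
        by simp
      then have "\<psi> (betac i (x (\<Sum>j<n. beta j (betac j (act c (beta k e)))))) = 0"
      proof -
        have "\<And>u v. \<psi> (betac i (x (u + v))) = \<psi> (betac i (x u)) + \<psi> (betac i (x v))"
          using psiadd xadd bcadd ik by simp
        from add_sum_comm[of "\<lambda>u. \<psi> (betac i (x u))" "\<lambda>j. beta j (betac j (act c (beta k e)))" "{..<n}", OF this]
        show ?thesis using S0 by simp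
      qed
      then have "\<psi> (c * F i k) = 0"
        unfolding F_def by (simp only: dec, simp add: xact bcact ik)
      then show "\<psi> (F i k * c) = 0" using psisym by simp
    qed
    have xb: "x (beta k e) = 0" if k: "k < n" for k
    proof -
      have "x (beta k e) = (\<Sum>i<n. beta i (betac i (x (beta k e))))" by (simp add: dec)
      also have "\<dots> = (\<Sum>i<n. beta i (0 * e))"
        by (intro sum.cong refl) (use F0 k in \<open>simp add: F_def\<close>)
      also have "\<dots> = 0" by (intro sum.neutral ballI) (simp del: mult_zero_left add: b1 act0)
      finally show ?thesis .
    qed
    show "x = (\<lambda>_. 0)"
    proof
      fix \<xi>
      have "x \<xi> = x (\<Sum>k<n. beta k (betac k \<xi>))" by (simp add: dec)
      also have "\<dots> = (\<Sum>k<n. x (beta k (betac k \<xi>)))"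
        using add_sum_comm[of x] xadd by simp
      also have "\<dots> = 0"
        by (intro sum.neutral ballI) (simp add: b3 xact xb acta0)
      finally show "x \<xi> = 0" .
    qed
  qed
qed

end
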